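(* Assume Assumption A holds, and let $\mu\in\mathcal{M}$. Then there exists an $S$-valued process $(\mathbf{t}_n)_{n\ge1}$, possibly defined on an enlargement of the probability space carrying the state process $(\mathbf{s}_n)_{n\ge1}$, such that: (P1) for every $n$, conditional on $\mathbf{s}_n$, the vector $(\mathbf{t}_1,\dots,\mathbf{t}_n)$ is independent of $(\mathbf{s}_{n+1},\mathbf{s}_{n+2},\dots)$; (P2) the law of the sequence $(\mathbf{t}_n)_n$ equals the law of the sequence $(\mathbf{s}_n)_n$; (P3) for each $n$, the law of the pair $(\mathbf{s}_n,\mathbf{t}_n)$ is $\mu$; (P4) for each $n$, the conditional law of $\mathbf{s}_n$ given $(\mathbf{t}_1,\dots,\mathbf{t}_n)$ is $\mu(\cdot\mid\mathbf{t}_n)$.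
   Context: $S$ is a finite set; $(\mathbf{s}_n)_{n\ge1}$ is an irreducible aperiodic Markov chain on $S$ with transition function $p(\cdot\mid\cdot)$, invariant measure $m$ (with full support), and $\mathbf{s}_1\sim m$. Assumption A: there exist nonnegative numbers $\alpha_s$, $s\in S$, with $\sum_{s\in S\setminus\{\bar s\}}\alpha_s\le1$ for every $\bar s\in S$, such that $p(s'\mid s)=\alpha_{s'}$ whenever $s'\neq s$. $\mathcal{M}$ is the set of probability distributions $\mu$ on $S\times S$ both of whose marginals equal $m$; $\mu(s\mid t)=\mu(s,t)/m(t)$. *)

theory Defs
  imports "HOL-Probability.Probability"
begin

text \<open>Transition functions are written p s' s = p(s' | s). Time is indexed from 0
  (index 0 corresponds to the paper's time 1).\<close>

definition stochastic :: "('a::finite \<Rightarrow> 'a \<Rightarrow> real) \<Rightarrow> bool" where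
  "stochastic p \<longleftrightarrow> (\<forall>s s'. 0 \<le> p s' s) \<and> (\<forall>s. (\<Sum>s'\<in>UNIV. p s' s) = 1)"

fun nstep :: "('a::finite \<Rightarrow> 'a \<Rightarrow> real) \<Rightarrow> nat \<Rightarrow> 'a \<Rightarrow> 'a \<Rightarrow> real" where
  "nstep p 0 s' s = (if s' = s then 1 else 0)"
| "nstep p (Suc n) s' s = (\<Sum>u\<in>UNIV. p s' u * nstep p n u s)"

definition irreducible_chain :: "('a::finite \<Rightarrow> 'a \<Rightarrow> real) \<Rightarrow> bool" where
  "irreducible_chain p \<longleftrightarrow> (\<forall>s s'. \<exists>n>0. nstep p n s' s > 0)"

definition aperiodic_chain :: "('a::finite \<Rightarrow> 'a \<Rightarrow> real) \<Rightarrow> bool" where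
  "aperiodic_chain p \<longleftrightarrow> (\<forall>s. Gcd {n. n > 0 \<and> nstep p n s s > 0} = (1::nat))"

definition invariant_measure :: "('a::finite \<Rightarrow> real) \<Rightarrow> ('a \<Rightarrow> 'a \<Rightarrow> real) \<Rightarrow> bool" where
  "invariant_measure m p \<longleftrightarrow> (\<forall>s. 0 \<le> m s) \<and> (\<Sum>s\<in>UNIV. m s) = 1 \<and>
     (\<forall>s'. (\<Sum>s\<in>UNIV. m s * p s' s) = m s')"

definition assumption_A :: "('a::finite \<Rightarrow> 'a \<Rightarrow> real) \<Rightarrow> bool" where
  "assumption_A p \<longleftrightarrow> (\<exists>\<alpha>::'a \<Rightarrow> real. (\<forall>s. 0 \<le> \<alpha> s) \<and>
     (\<forall>sb. (\<Sum>s\<in>UNIV - {sb}. \<alpha> s) \<le> 1) \<and> (\<forall>s s'. s' \<noteq> s \<longrightarrow> p s' s = \<alpha> s'))"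

definition couplings :: "('a::finite \<Rightarrow> real) \<Rightarrow> ('a \<times> 'a \<Rightarrow> real) set" where
  "couplings m = {\<mu>. (\<forall>x. 0 \<le> \<mu> x) \<and> (\<Sum>x\<in>UNIV. \<mu> x) = 1 \<and>
     (\<forall>a. (\<Sum>b\<in>UNIV. \<mu> (a, b)) = m a) \<and> (\<forall>b. (\<Sum>a\<in>UNIV. \<mu> (a, b)) = m b)}"

definition cond_coupling :: "('a \<times> 'a \<Rightarrow> real) \<Rightarrow> ('a \<Rightarrow> real) \<Rightarrow> 'a \<Rightarrow> 'a \<Rightarrow> real" where
  "cond_coupling \<mu> m a b = \<mu> (a, b) / m b"

definition markov_law :: "'w measure \<Rightarrow> (nat \<Rightarrow> 'w \<Rightarrow> 'a::finite) \<Rightarrow> ('a \<Rightarrow> real) \<Rightarrow> ('a \<Rightarrow> 'a \<Rightarrow> real) \<Rightarrow> bool" where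
  "markov_law M X m p \<longleftrightarrow> (\<forall>n x. measure M {w \<in> space M. \<forall>i\<le>n. X i w = x i}
      = m (x 0) * (\<Prod>i<n. p (x (Suc i)) (x i)))"

end

theory Submission
  imports Defs
begin

fun Xc :: "'b \<Rightarrow> nat \<Rightarrow> (nat \<Rightarrow> 'b \<Rightarrow> 'b) \<Rightarrow> 'b" where
  "Xc c 0 \<omega> = \<omega> 0 c"
| "Xc c (Suc n) \<omega> = \<omega> (Suc n) (Xc c n \<omega>)"

lemma Xc_eq_iff:
  "(\<forall>i\<le>n. Xc c i \<omega> = x i) \<longleftrightarrow> (\<forall>i\<in>{..n}. \<omega> i \<in> (if i = 0 then {g. g c = x 0} else {g. g (x (i - 1)) = x i}))"
proof (induction n)
  case 0 then show ?case by auto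
next
  case (Suc n)
  have "(\<forall>i\<le>Suc n. Xc c i \<omega> = x i) \<longleftrightarrow> (\<forall>i\<le>n. Xc c i \<omega> = x i) \<and> Xc c (Suc n) \<omega> = x (Suc n)"
    by (auto simp: le_Suc_eq)
  also have "\<dots> \<longleftrightarrow> (\<forall>i\<le>n. Xc c i \<omega> = x i) \<and> \<omega> (Suc n) (x n) = x (Suc n)"
    by auto
  also have "\<dots> \<longleftrightarrow> (\<forall>i\<in>{..n}. \<omega> i \<in> (if i = 0 then {g. g c = x 0} else {g. g (x (i - 1)) = x i})) \<and> \<omega> (Suc n) (x n) = x (Suc n)"
    using Suc by simp
  also have "\<dots> \<longleftrightarrow> (\<forall>i\<in>{..Suc n}. \<omega> i \<in> (if i = 0 then {g. g c = x 0} else {g. g (x (i - 1)) = x i}))"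
    by (simp add: atMost_Suc conj_commute)
  finally show ?case .
qed

lemma measure_Pi_pmf_single:
  fixes P :: "'b::finite \<Rightarrow> 'c pmf"
  shows "measure_pmf.prob (Pi_pmf UNIV d P) {g. g y = z} = pmf (P y) z"
proof -
  have "{g. g y = z} = Pi UNIV (\<lambda>u. if u = y then {z} else UNIV)"
    by (auto simp: Pi_def split: if_splits)
  then have "measure_pmf.prob (Pi_pmf UNIV d P) {g. g y = z} =
     (\<Prod>u\<in>UNIV. measure_pmf.prob (P u) (if u = y then {z} else UNIV))"
    by (simp add: measure_Pi_pmf_Pi)
  also have "\<dots> = (\<Prod>u\<in>UNIV. if u = y then pmf (P y) z else 1)"
    by (intro prod.cong) (auto simp: measure_pmf_single)
  also have "\<dots> = pmf (P y) z" by (simp add: prod.delta)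
  finally show ?thesis .
qed

lemma chain_exists:
  fixes \<iota> :: "'b::finite \<Rightarrow> real" and Kp :: "'b \<Rightarrow> 'b \<Rightarrow> real"
  assumes i0: "\<forall>z. 0 \<le> \<iota> z" and i1: "sum \<iota> UNIV = 1"
    and k0: "\<forall>y z. 0 \<le> Kp y z" and k1: "\<forall>y. (\<Sum>z\<in>UNIV. Kp y z) = 1"
  shows "\<exists>M::(nat \<Rightarrow> 'b) measure. prob_space M \<and>
     sets M = sets (PiM UNIV (\<lambda>_. count_space UNIV)) \<and>
     space M = space (PiM UNIV (\<lambda>_::nat. count_space (UNIV::'b set))) \<and>
     (\<forall>n x. measure M {w\<in>space M. \<forall>i\<le>n. w i = x i} = \<iota> (x 0) * (\<Prod>i<n. Kp (x i) (x (Suc i))))"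
proof -
  define ip where "ip = embed_pmf \<iota>"
  define kp where "kp = (\<lambda>y. embed_pmf (Kp y))"
  have pip: "pmf ip z = \<iota> z" for z
    unfolding ip_def using i0 i1 by (subst pmf_embed_pmf) (auto simp: nn_integral_count_space_finite sum_nonneg)
  have pkp: "pmf (kp y) z = Kp y z" for y z
    unfolding kp_def using k0 k1 by (subst pmf_embed_pmf) (auto simp: nn_integral_count_space_finite sum_nonneg)
  obtain c :: 'b where True by blast
  define N where "N = (\<lambda>n::nat. measure_pmf (if n = 0 then Pi_pmf UNIV c (\<lambda>_. ip) else Pi_pmf UNIV c kp))"
  interpret N: product_prob_space N UNIV
    unfolding N_def by unfold_locales
  define M0 where "M0 = PiM UNIV N"
  define PS where "PS = PiM UNIV (\<lambda>_::nat. count_space (UNIV::'b set))"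
  have mX: "Xc c n \<in> measurable M0 (count_space UNIV)" for n
  proof (induction n)
    case 0
    have "(\<lambda>\<omega>. \<omega> 0) \<in> measurable M0 (N 0)" unfolding M0_def by simp
    moreover have "(\<lambda>g::'b\<Rightarrow>'b. g c) \<in> measurable (N 0) (count_space UNIV)"
      unfolding N_def by simp
    ultimately show ?case by (simp add: measurable_compose[of _ _ "N 0"])
  next
    case (Suc n)
    have "(\<lambda>\<omega>. \<omega> (Suc n) i) \<in> measurable M0 (count_space UNIV)" for i
    proof -
      have "(\<lambda>\<omega>. \<omega> (Suc n)) \<in> measurable M0 (N (Suc n))" unfolding M0_def by simp
      moreover have "(\<lambda>g::'b\<Rightarrow>'b. g i) \<in> measurable (N (Suc n)) (count_space UNIV)"
        unfolding N_def by simp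
      ultimately show ?thesis by (simp add: measurable_compose[of _ _ "N (Suc n)"])
    qed
    then show ?case using Suc
      by (simp add: measurable_compose_countable[where f="\<lambda>i \<omega>. \<omega> (Suc n) i" and g="Xc c n"])
  qed
  have mF: "(\<lambda>\<omega> n. Xc c n \<omega>) \<in> measurable M0 PS"
    unfolding PS_def by (rule measurable_PiM_single') (use mX in auto)
  define M where "M = distr M0 PS (\<lambda>\<omega> n. Xc c n \<omega>)"
  have "prob_space M" unfolding M_def M0_def
    using mF M0_def N.prob_space_distr by blast
  moreover have "sets M = sets PS" "space M = space PS" unfolding M_def by auto
  moreover have "measure M {w\<in>space M. \<forall>i\<le>n. w i = x i} = \<iota> (x 0) * (\<Prod>i<n. Kp (x i) (x (Suc i)))" for n x
  proof -
    have set: "{w\<in>space M. \<forall>i\<le>n. w i = x i} \<in> sets PS"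
    proof -
      have "{w\<in>space M. \<forall>i\<le>n. w i = x i} = {w\<in>space PS. \<forall>i\<in>{..n}. w i \<in> {x i}}"
        using \<open>space M = space PS\<close> by auto
      also have "\<dots> \<in> sets PS" unfolding PS_def
        by (rule sets.sets_Collect_finite_All) auto
      finally show ?thesis .
    qed
    have "measure M {w\<in>space M. \<forall>i\<le>n. w i = x i} = measure M0 ((\<lambda>\<omega> n. Xc c n \<omega>) -` {w\<in>space M. \<forall>i\<le>n. w i = x i} \<inter> space M0)"
      using measure_distr[OF mF set] unfolding M_def .
    also have "(\<lambda>\<omega> n. Xc c n \<omega>) -` {w\<in>space M. \<forall>i\<le>n. w i = x i} \<inter> space M0
       = {\<omega>\<in>space M0. \<forall>i\<le>n. Xc c i \<omega> = x i}"
      using mF \<open>space M = space PS\<close> by (auto dest: measurable_space)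
    also have "\<dots> = {\<omega>\<in>space (PiM UNIV N). \<forall>i\<in>{..n}. \<omega> i \<in> (if i = 0 then {g. g c = x 0} else {g. g (x (i - 1)) = x i})}"
      unfolding M0_def by (simp add: Xc_eq_iff)
    also have "measure M0 \<dots> = (\<Prod>i\<in>{..n}. measure (N i) (if i = 0 then {g. g c = x 0} else {g. g (x (i - 1)) = x i}))"
    proof -
      have "emeasure (PiM UNIV N) {\<omega>\<in>space (PiM UNIV N). \<forall>i\<in>{..n}. \<omega> i \<in> (if i = 0 then {g. g c = x 0} else {g. g (x (i - 1)) = x i})}
         = (\<Prod>i\<in>{..n}. emeasure (N i) (if i = 0 then {g. g c = x 0} else {g. g (x (i - 1)) = x i}))"
        by (rule N.emeasure_PiM_Collect) (auto simp: N_def)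
      also have "\<dots> = ennreal (\<Prod>i\<in>{..n}. measure (N i) (if i = 0 then {g. g c = x 0} else {g. g (x (i - 1)) = x i}))"
        by (simp add: N.M.emeasure_eq_measure prod_ennreal)
      finally show ?thesis unfolding M0_def measure_def by (simp add: prod_nonneg)
    qed
    also have "\<dots> = \<iota> (x 0) * (\<Prod>i<n. Kp (x i) (x (Suc i)))"
    proof -
      have "(\<Prod>i\<in>{..n}. measure (N i) (if i = 0 then {g. g c = x 0} else {g. g (x (i - 1)) = x i}))
        = (\<Prod>i\<in>{..<Suc n}. measure (N i) (if i = 0 then {g. g c = x 0} else {g. g (x (i - 1)) = x i}))"
        by (simp only: lessThan_Suc_atMost)
      also have "\<dots> = measure (N 0) {g. g c = x 0} * (\<Prod>i<n. measure (N (Suc i)) {g. g (x i) = x (Suc i)})"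
        by (subst prod.lessThan_Suc_shift) simp
      also have "\<dots> = \<iota> (x 0) * (\<Prod>i<n. Kp (x i) (x (Suc i)))"
        unfolding N_def by (simp add: measure_Pi_pmf_single pip pkp)
      finally show ?thesis .
    qed
    finally show ?thesis .
  qed
  ultimately show ?thesis unfolding PS_def by blast
qed

fun Wf :: "('b::finite \<Rightarrow> real) \<Rightarrow> ('b \<Rightarrow> 'b \<Rightarrow> real) \<Rightarrow> (nat \<Rightarrow> 'b set) \<Rightarrow> nat \<Rightarrow> 'b \<Rightarrow> real" where
  "Wf \<iota> K A 0 z = (if z \<in> A 0 then \<iota> z else 0)"
| "Wf \<iota> K A (Suc n) z = (if z \<in> A (Suc n) then (\<Sum>y\<in>UNIV. Wf \<iota> K A n y * K y z) else 0)"

lemma Wf_cong: "(\<forall>i\<le>n. A i = B i) \<Longrightarrow> Wf \<iota> K A n z = Wf \<iota> K B n z"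
  by (induction n arbitrary: z) auto

lemma Wf_out: "z \<notin> A n \<Longrightarrow> Wf \<iota> K A n z = 0"
  by (cases n) auto

lemma cyl_rewrite:
  fixes n N :: nat assumes "n \<le> N"
  shows "{w\<in>S. (\<forall>i\<le>n. w i \<in> A i) \<and> (\<forall>i\<in>{n..N}. w i = z i)} =
    {w\<in>S. \<forall>i\<in>{..N}. w i \<in> (if i \<le> n then A i else UNIV) \<inter> (if n \<le> i then {z i} else UNIV)}"
proof (intro Collect_cong conj_cong refl iffI ballI allI impI)
  fix w i assume "(\<forall>i\<le>n. w i \<in> A i) \<and> (\<forall>i\<in>{n..N}. w i = z i)" "i \<in> {..N}"
  then show "w i \<in> (if i \<le> n then A i else UNIV) \<inter> (if n \<le> i then {z i} else UNIV)" by auto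
next
  fix w i assume a: "\<forall>i\<in>{..N}. w i \<in> (if i \<le> n then A i else UNIV) \<inter> (if n \<le> i then {z i} else UNIV)"
  show "(\<forall>i\<le>n. w i \<in> A i) \<and> (\<forall>i\<in>{n..N}. w i = z i)"
  proof safe
    fix i assume "i \<le> n"
    moreover have "i \<in> {..N}" using \<open>i \<le> n\<close> assms by simp
    ultimately show "w i \<in> A i" using a by (auto dest!: bspec[of _ _ i])
  next
    fix i assume "i \<in> {n..N}" then show "w i = z i" using a assms by (auto dest!: bspec[of _ _ i])
  qed
qed

context
  fixes M :: "(nat \<Rightarrow> 'b::finite) measure" and \<iota> :: "'b \<Rightarrow> real" and Kp :: "'b \<Rightarrow> 'b \<Rightarrow> real"
  assumes Mp: "prob_space M"
   and sM: "sets M = sets (PiM UNIV (\<lambda>_::nat. count_space (UNIV::'b set)))"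
   and spM: "space M = space (PiM UNIV (\<lambda>_::nat. count_space (UNIV::'b set)))"
   and fdd: "\<And>n x. measure M {w\<in>space M. \<forall>i\<le>n. w i = x i} = \<iota> (x 0) * (\<Prod>i<n. Kp (x i) (x (Suc i)))"
begin

interpretation P: prob_space M by (rule Mp)

lemma cyl_sets: 
  assumes "finite J" shows "{w\<in>space M. \<forall>i\<in>J. w i \<in> B i} \<in> sets M"
proof -
  have "{w\<in>space M. \<forall>i\<in>J. w i \<in> B i} = {w\<in>space (PiM UNIV (\<lambda>_::nat. count_space (UNIV::'b set))). \<forall>i\<in>J. w i \<in> B i}"
    using spM by simp
  also have "\<dots> \<in> sets (PiM UNIV (\<lambda>_::nat. count_space (UNIV::'b set)))"
    by (rule sets.sets_Collect_finite_All) (auto simp: assms)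
  finally show ?thesis using sM by simp
qed

lemma Lpath:
  "measure M {w\<in>space M. (\<forall>i\<le>n. w i \<in> A i) \<and> (\<forall>i\<in>{n..n+k}. w i = x i)}
   = Wf \<iota> Kp A n (x n) * (\<Prod>i\<in>{n..<n+k}. Kp (x i) (x (Suc i)))"
proof (induction n arbitrary: k x)
  case 0
  have "{w\<in>space M. (\<forall>i\<le>0. w i \<in> A i) \<and> (\<forall>i\<in>{0..0+k}. w i = x i)} =
     (if x 0 \<in> A 0 then {w\<in>space M. \<forall>i\<le>k. w i = x i} else {})" by (auto; force)
  then show ?case using fdd by (simp add: atLeast0LessThan)
next
  case (Suc n)
  show ?case
  proof (cases "x (Suc n) \<in> A (Suc n)")
    case False
    then have "{w\<in>space M. (\<forall>i\<le>Suc n. w i \<in> A i) \<and> (\<forall>i\<in>{Suc n..Suc n+k}. w i = x i)} = {}"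
      by force
    note emp = this
    show ?thesis unfolding emp using False by simp
  next
    case True
    define E where "E y = {w\<in>space M. (\<forall>i\<le>n. w i \<in> A i) \<and> (\<forall>i\<in>{n..n+Suc k}. w i = (x(n:=y)) i)}" for y
    have eq: "{w\<in>space M. (\<forall>i\<le>Suc n. w i \<in> A i) \<and> (\<forall>i\<in>{Suc n..Suc n+k}. w i = x i)} = (\<Union>y\<in>UNIV. E y)"
    proof (intro equalityI subsetI)
      fix w assume w: "w \<in> {w\<in>space M. (\<forall>i\<le>Suc n. w i \<in> A i) \<and> (\<forall>i\<in>{Suc n..Suc n+k}. w i = x i)}"
      have w1: "w \<in> space M" "\<forall>i\<le>Suc n. w i \<in> A i" "\<forall>i\<in>{Suc n..Suc n+k}. w i = x i"
        using w by auto
      have w2: "\<forall>i\<le>n. w i \<in> A i" using w1(2) by simp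
      have w3: "\<forall>i\<in>{n..n+Suc k}. w i = (x(n:=w n)) i"
      proof
        fix i assume i: "i \<in> {n..n+Suc k}"
        show "w i = (x(n:=w n)) i"
        proof (cases "i = n")
          case False
          then have "i \<in> {Suc n..Suc n+k}" using i by auto
          then show ?thesis using w1(3) False by simp
        qed simp
      qed
      have "w \<in> E (w n)" unfolding E_def using w1(1) w2 w3 by blast
      then show "w \<in> (\<Union>y\<in>UNIV. E y)" by blast
    next
      fix w assume "w \<in> (\<Union>y\<in>UNIV. E y)"
      then obtain y where w: "w \<in> E y" by blast
      have a: "w (Suc n) = x (Suc n)" using w unfolding E_def by auto
      show "w \<in> {w\<in>space M. (\<forall>i\<le>Suc n. w i \<in> A i) \<and> (\<forall>i\<in>{Suc n..Suc n+k}. w i = x i)}"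
        using w True a unfolding E_def by (auto simp: le_Suc_eq)
    qed
    have Es: "E y \<in> sets M" for y
    proof -
      have "E y = {w\<in>space M. \<forall>i\<in>{..n+Suc k}. w i \<in> (if i \<le> n then A i else UNIV) \<inter> (if n \<le> i then {(x(n:=y)) i} else UNIV)}"
        unfolding E_def by (rule cyl_rewrite) simp
      then show ?thesis by (simp only:) (rule cyl_sets, simp)
    qed
    have "measure M (\<Union>y\<in>UNIV. E y) = (\<Sum>y\<in>UNIV. measure M (E y))"
    proof (rule P.finite_measure_finite_Union)
      have En: "w n = y" if "w \<in> E y" for w y
      proof -
        have "\<forall>i\<in>{n..n+Suc k}. w i = (x(n:=y)) i" using that by (simp add: E_def)
        then have "w n = (x(n:=y)) n" by (rule bspec) simp
        then show ?thesis by simp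
      qed
      show "disjoint_family_on E UNIV" unfolding disjoint_family_on_def using En by blast
      show "E ` UNIV \<subseteq> sets M" using Es by blast
    qed simp
    also have "\<dots> = (\<Sum>y\<in>UNIV. Wf \<iota> Kp A n y * Kp y (x (Suc n)) * (\<Prod>i\<in>{Suc n..<Suc n+k}. Kp (x i) (x (Suc i))))"
    proof (intro sum.cong refl)
      fix y
      have "measure M (E y) = Wf \<iota> Kp A n y * (\<Prod>i\<in>{n..<n+Suc k}. Kp ((x(n:=y)) i) ((x(n:=y)) (Suc i)))"
        unfolding E_def using Suc.IH[of "Suc k" "x(n:=y)"] by simp
      also have "(\<Prod>i\<in>{n..<n+Suc k}. Kp ((x(n:=y)) i) ((x(n:=y)) (Suc i)))
          = Kp y (x (Suc n)) * (\<Prod>i\<in>{Suc n..<Suc n+k}. Kp ((x(n:=y)) i) ((x(n:=y)) (Suc i)))"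
        by (subst prod.atLeast_Suc_lessThan) auto
      also have "(\<Prod>i\<in>{Suc n..<Suc n+k}. Kp ((x(n:=y)) i) ((x(n:=y)) (Suc i))) = (\<Prod>i\<in>{Suc n..<Suc n+k}. Kp (x i) (x (Suc i)))"
        by (intro prod.cong) auto
      finally show "measure M (E y) = Wf \<iota> Kp A n y * Kp y (x (Suc n)) * (\<Prod>i\<in>{Suc n..<Suc n+k}. Kp (x i) (x (Suc i)))"
        by simp
    qed
    also have "\<dots> = Wf \<iota> Kp A (Suc n) (x (Suc n)) * (\<Prod>i\<in>{Suc n..<Suc n+k}. Kp (x i) (x (Suc i)))"
      using True by (simp add: sum_distrib_right)
    finally show ?thesis using eq by simp
  qed
qed

lemma Lsum: "measure M {w\<in>space M. \<forall>i\<le>n. w i \<in> A i} = (\<Sum>z\<in>UNIV. Wf \<iota> Kp A n z)"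
proof -
  define E where "E z = {w\<in>space M. (\<forall>i\<le>n. w i \<in> A i) \<and> (\<forall>i\<in>{n..n+0}. w i = (\<lambda>_. z) i)}" for z
  have eq: "{w\<in>space M. \<forall>i\<le>n. w i \<in> A i} = (\<Union>z\<in>UNIV. E z)"
  proof (intro equalityI subsetI)
    fix w assume "w \<in> {w\<in>space M. \<forall>i\<le>n. w i \<in> A i}"
    then have "w \<in> E (w n)" unfolding E_def by simp
    then show "w \<in> (\<Union>z\<in>UNIV. E z)" by blast
  qed (auto simp: E_def)
  have Es: "E z \<in> sets M" for z
  proof -
    have "E z = {w\<in>space M. \<forall>i\<in>{..n+0}. w i \<in> (if i \<le> n then A i else UNIV) \<inter> (if n \<le> i then {(\<lambda>_. z) i} else UNIV)}"
      unfolding E_def by (rule cyl_rewrite) simp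
    then show ?thesis by (simp only:) (rule cyl_sets, simp)
  qed
  have "measure M (\<Union>z\<in>UNIV. E z) = (\<Sum>z\<in>UNIV. measure M (E z))"
  proof (rule P.finite_measure_finite_Union)
    have En: "w n = z" if "w \<in> E z" for w z
      using that by (simp add: E_def)
    show "disjoint_family_on E UNIV" unfolding disjoint_family_on_def using En by blast
    show "E ` UNIV \<subseteq> sets M" using Es by blast
  qed simp
  also have "\<dots> = (\<Sum>z\<in>UNIV. Wf \<iota> Kp A n z)"
    unfolding E_def using Lpath[of n A 0 "\<lambda>_. z" for z] by simp
  finally show ?thesis using eq by simp
qed

end
fun Gf :: "('a::finite \<Rightarrow> 'a \<Rightarrow> real) \<Rightarrow> 'a \<Rightarrow> (nat \<Rightarrow> 'a) \<Rightarrow> nat \<Rightarrow> nat \<Rightarrow> 'a \<Rightarrow> real" where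
  "Gf p a y n 0 s = (if s = a then 1 else 0)"
| "Gf p a y n (Suc j) s' = (if s' = y (n + Suc j) then (\<Sum>s\<in>UNIV. Gf p a y n j s * p s' s) else 0)"

lemma setE1:
  fixes w :: "nat \<Rightarrow> 'a \<times> 'a"
  shows "(fst (w n) = a \<and> (\<forall>i\<le>n. snd (w i) = x i) \<and> (\<forall>i\<in>{Suc n..n+k}. fst (w i) = y i)) \<longleftrightarrow>
    (\<forall>i\<le>n+k. w i \<in> (if i < n then UNIV \<times> {x i} else if i = n then {(a, x n)} else {y i} \<times> UNIV))"
proof
  assume h: "fst (w n) = a \<and> (\<forall>i\<le>n. snd (w i) = x i) \<and> (\<forall>i\<in>{Suc n..n+k}. fst (w i) = y i)"
  show "\<forall>i\<le>n+k. w i \<in> (if i < n then UNIV \<times> {x i} else if i = n then {(a, x n)} else {y i} \<times> UNIV)"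
  proof (intro allI impI)
    fix i assume i: "i \<le> n + k"
    consider "i < n" | "i = n" | "n < i" by linarith
    then show "w i \<in> (if i < n then UNIV \<times> {x i} else if i = n then {(a, x n)} else {y i} \<times> UNIV)"
    proof cases
      case 1 then show ?thesis using h by (auto simp: mem_Times_iff)
    next
      case 2 then show ?thesis using h by (cases "w n") auto
    next
      case 3 then have "i \<in> {Suc n..n+k}" using i by auto
      then show ?thesis using h 3 by (auto simp: mem_Times_iff)
    qed
  qed
next
  assume h: "\<forall>i\<le>n+k. w i \<in> (if i < n then UNIV \<times> {x i} else if i = n then {(a, x n)} else {y i} \<times> UNIV)"
  have hn: "w n = (a, x n)" using h[rule_format, of n] by simp
  have "snd (w i) = x i" if "i \<le> n" for i
  proof (cases "i = n")
    case False
    then have "i < n" using that by simp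
    then show ?thesis using h[rule_format, of i] by (auto simp: mem_Times_iff)
  qed (simp add: hn)
  moreover have "fst (w i) = y i" if "i \<in> {Suc n..n+k}" for i
    using that h[rule_format, of i] by (auto simp: mem_Times_iff)
  ultimately show "fst (w n) = a \<and> (\<forall>i\<le>n. snd (w i) = x i) \<and> (\<forall>i\<in>{Suc n..n+k}. fst (w i) = y i)"
    using hn by simp
qed

lemma setE3:
  fixes w :: "nat \<Rightarrow> 'a \<times> 'a"
  shows "(fst (w n) = a \<and> (\<forall>i\<in>{Suc n..n+k}. fst (w i) = y i)) \<longleftrightarrow>
    (\<forall>i\<le>n+k. w i \<in> (if i < n then UNIV else if i = n then {a} \<times> UNIV else {y i} \<times> UNIV))"
proof
  assume h: "fst (w n) = a \<and> (\<forall>i\<in>{Suc n..n+k}. fst (w i) = y i)"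
  show "\<forall>i\<le>n+k. w i \<in> (if i < n then UNIV else if i = n then {a} \<times> UNIV else {y i} \<times> UNIV)"
  proof (intro allI impI)
    fix i assume i: "i \<le> n + k"
    consider "i < n" | "i = n" | "n < i" by linarith
    then show "w i \<in> (if i < n then UNIV else if i = n then {a} \<times> UNIV else {y i} \<times> UNIV)"
    proof cases
      case 1 then show ?thesis by simp
    next
      case 2 then show ?thesis using h by (auto simp: mem_Times_iff)
    next
      case 3 then have "i \<in> {Suc n..n+k}" using i by auto
      then show ?thesis using h 3 by (auto simp: mem_Times_iff)
    qed
  qed
next
  assume h: "\<forall>i\<le>n+k. w i \<in> (if i < n then UNIV else if i = n then {a} \<times> UNIV else {y i} \<times> UNIV)"
  have hn: "fst (w n) = a" using h[rule_format, of n] by (auto simp: mem_Times_iff)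
  moreover have "fst (w i) = y i" if "i \<in> {Suc n..n+k}" for i
    using that h[rule_format, of i] by (auto simp: mem_Times_iff)
  ultimately show "fst (w n) = a \<and> (\<forall>i\<in>{Suc n..n+k}. fst (w i) = y i)" by simp
qed

definition rr :: "('a::finite \<Rightarrow> 'a \<Rightarrow> real) \<Rightarrow> ('a \<times> 'a \<Rightarrow> real) \<Rightarrow> ('a \<Rightarrow> real) \<Rightarrow> 'a \<Rightarrow> 'a \<Rightarrow> real" where
  "rr p \<mu> m s' t = (\<Sum>s\<in>UNIV. p s' s * cond_coupling \<mu> m s t)"

definition qq :: "('a::finite \<Rightarrow> 'a \<Rightarrow> real) \<Rightarrow> ('a \<times> 'a \<Rightarrow> real) \<Rightarrow> ('a \<Rightarrow> real) \<Rightarrow> 'a \<Rightarrow> 'a \<Rightarrow> 'a \<Rightarrow> real" where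
  "qq p \<mu> m s' t t' = (if rr p \<mu> m s' t = 0 then p t' t else p t' t * cond_coupling \<mu> m s' t' / rr p \<mu> m s' t)"

definition KK :: "('a::finite \<Rightarrow> 'a \<Rightarrow> real) \<Rightarrow> ('a \<times> 'a \<Rightarrow> real) \<Rightarrow> ('a \<Rightarrow> real) \<Rightarrow> 'a \<times> 'a \<Rightarrow> 'a \<times> 'a \<Rightarrow> real" where
  "KK p \<mu> m y z = p (fst z) (fst y) * qq p \<mu> m (fst z) (snd y) (snd z)"

lemma sum_pair_UNIV: "(\<Sum>y\<in>(UNIV::('a::finite \<times> 'b::finite) set). f y) = (\<Sum>s\<in>UNIV. \<Sum>t\<in>UNIV. f (s, t))"
  by (simp add: sum.cartesian_product UNIV_Times_UNIV[symmetric] del: UNIV_Times_UNIV)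

context
  fixes p :: "'a::finite \<Rightarrow> 'a \<Rightarrow> real" and m :: "'a \<Rightarrow> real" and \<mu> :: "'a \<times> 'a \<Rightarrow> real"
  assumes st: "stochastic p" and inv: "invariant_measure m p" and mpos: "\<forall>s. m s > 0"
    and aA: "assumption_A p" and cpl: "\<mu> \<in> couplings m"
begin

lemma p_nonneg: "0 \<le> p s' s" using st by (simp add: stochastic_def)
lemma p_sum: "(\<Sum>s'\<in>UNIV. p s' s) = 1" using st by (simp add: stochastic_def)
lemma m_pos: "0 < m s" using mpos by simp
lemma m_inv: "(\<Sum>s\<in>UNIV. m s * p s' s) = m s'" using inv by (simp add: invariant_measure_def)
lemma m_sum: "(\<Sum>s\<in>UNIV. m s) = 1" using inv by (simp add: invariant_measure_def)
lemma mu_nonneg: "0 \<le> \<mu> x" using cpl by (cases x) (simp add: couplings_def)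
lemma mu_m1: "(\<Sum>b\<in>UNIV. \<mu> (a, b)) = m a" using cpl by (simp add: couplings_def)
lemma mu_m2: "(\<Sum>a\<in>UNIV. \<mu> (a, b)) = m b" using cpl by (simp add: couplings_def)

lemma cc_nonneg: "0 \<le> cond_coupling \<mu> m a b"
  unfolding cond_coupling_def using mu_nonneg m_pos[of b] by simp
lemma cc_mult: "cond_coupling \<mu> m a b * m b = \<mu> (a, b)"
  unfolding cond_coupling_def using m_pos[of b] by simp
lemma cc_sum: "(\<Sum>a\<in>UNIV. cond_coupling \<mu> m a b) = 1"
  unfolding cond_coupling_def using m_pos[of b] mu_m2[of b] by (simp add: sum_divide_distrib[symmetric])

lemma KI: "(\<Sum>t'\<in>UNIV. cond_coupling \<mu> m s' t' * p t' t) = rr p \<mu> m s' t"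
proof -
  obtain \<alpha> :: "'a \<Rightarrow> real" where al: "\<forall>s s'. s' \<noteq> s \<longrightarrow> p s' s = \<alpha> s'"
    using aA unfolding assumption_A_def by blast
  define \<beta> where "\<beta> = (\<Sum>s\<in>UNIV. \<alpha> s)"
  have pform: "p u s = \<alpha> u + (if u = s then 1 - \<beta> else 0)" for u s
  proof (cases "u = s")
    case True
    have "1 = (\<Sum>v\<in>UNIV. p v s)" using p_sum by simp
    also have "\<dots> = p s s + (\<Sum>v\<in>UNIV-{s}. p v s)" by (simp add: sum.remove)
    also have "(\<Sum>v\<in>UNIV-{s}. p v s) = (\<Sum>v\<in>UNIV-{s}. \<alpha> v)" using al by (intro sum.cong) auto
    also have "\<dots> = \<beta> - \<alpha> s" unfolding \<beta>_def by (simp add: sum.remove[of UNIV s \<alpha>])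
    finally show ?thesis using True by simp
  qed (use al in auto)
  have am: "\<alpha> u = \<beta> * m u" for u
  proof -
    have "m u = (\<Sum>s\<in>UNIV. m s * (\<alpha> u + (if u = s then 1 - \<beta> else 0)))"
      using m_inv[of u] by (simp add: pform)
    also have "\<dots> = (\<Sum>s\<in>UNIV. m s * \<alpha> u + (if u = s then m s * (1 - \<beta>) else 0))"
      by (intro sum.cong) (auto simp: distrib_left)
    also have "\<dots> = (\<Sum>s\<in>UNIV. m s * \<alpha> u) + (\<Sum>s\<in>UNIV. (if u = s then m s * (1 - \<beta>) else 0))"
      by (rule sum.distrib)
    also have "\<dots> = \<alpha> u + m u * (1 - \<beta>)"
      by (simp add: sum_distrib_right[symmetric] m_sum)
    finally show ?thesis by (simp add: algebra_simps)
  qed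
  have "(\<Sum>t'\<in>UNIV. cond_coupling \<mu> m s' t' * p t' t)
     = (\<Sum>t'\<in>UNIV. \<beta> * (cond_coupling \<mu> m s' t' * m t')) + (\<Sum>t'\<in>UNIV. (if t' = t then cond_coupling \<mu> m s' t' * (1 - \<beta>) else 0))"
  proof -
    have "(\<Sum>t'\<in>UNIV. cond_coupling \<mu> m s' t' * p t' t) = (\<Sum>t'\<in>UNIV. \<beta> * (cond_coupling \<mu> m s' t' * m t') + (if t' = t then cond_coupling \<mu> m s' t' * (1 - \<beta>) else 0))"
      by (intro sum.cong) (auto simp: pform am algebra_simps)
    then show ?thesis by (simp add: sum.distrib)
  qed
  also have "\<dots> = \<beta> * m s' + cond_coupling \<mu> m s' t * (1 - \<beta>)"
    by (simp add: cc_mult sum_distrib_left[symmetric] mu_m1)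
  finally have L: "(\<Sum>t'\<in>UNIV. cond_coupling \<mu> m s' t' * p t' t) = \<beta> * m s' + cond_coupling \<mu> m s' t * (1 - \<beta>)" .
  have "rr p \<mu> m s' t = (\<Sum>s\<in>UNIV. \<alpha> s' * cond_coupling \<mu> m s t) + (\<Sum>s\<in>UNIV. (if s' = s then cond_coupling \<mu> m s t * (1 - \<beta>) else 0))"
  proof -
    have "rr p \<mu> m s' t = (\<Sum>s\<in>UNIV. \<alpha> s' * cond_coupling \<mu> m s t + (if s' = s then cond_coupling \<mu> m s t * (1 - \<beta>) else 0))"
      unfolding rr_def by (intro sum.cong) (auto simp: pform algebra_simps)
    then show ?thesis by (simp add: sum.distrib)
  qed
  also have "\<dots> = \<alpha> s' + cond_coupling \<mu> m s' t * (1 - \<beta>)"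
    by (simp add: sum_distrib_left[symmetric] cc_sum)
  finally show ?thesis using L am by simp
qed

lemma rr_nonneg: "0 \<le> rr p \<mu> m s' t"
  unfolding rr_def by (intro sum_nonneg mult_nonneg_nonneg p_nonneg cc_nonneg)

lemma rq: "rr p \<mu> m s' t * qq p \<mu> m s' t t' = p t' t * cond_coupling \<mu> m s' t'"
proof (cases "rr p \<mu> m s' t = 0")
  case True
  then have "(\<Sum>t'\<in>UNIV. cond_coupling \<mu> m s' t' * p t' t) = 0" using KI by simp
  then have "\<forall>t'\<in>UNIV. cond_coupling \<mu> m s' t' * p t' t = 0"
    by (subst (asm) sum_nonneg_eq_0_iff) (auto intro: mult_nonneg_nonneg p_nonneg cc_nonneg)
  then show ?thesis using True by (simp add: mult.commute)
next
  case False
  then show ?thesis unfolding qq_def by simp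
qed

lemma qq_nonneg: "0 \<le> qq p \<mu> m s' t t'"
  unfolding qq_def using rr_nonneg p_nonneg cc_nonneg by simp

lemma qq_sum: "(\<Sum>t'\<in>UNIV. qq p \<mu> m s' t t') = 1"
proof (cases "rr p \<mu> m s' t = 0")
  case True
  then show ?thesis unfolding qq_def by (simp add: p_sum)
next
  case False
  have "(\<Sum>t'\<in>UNIV. qq p \<mu> m s' t t') = (\<Sum>t'\<in>UNIV. cond_coupling \<mu> m s' t' * p t' t) / rr p \<mu> m s' t"
    unfolding qq_def using False by (simp add: sum_divide_distrib mult.commute)
  then show ?thesis using KI False by simp
qed

lemma KK_nonneg: "0 \<le> KK p \<mu> m y z"
  unfolding KK_def by (intro mult_nonneg_nonneg p_nonneg qq_nonneg)

lemma KK_marg: "(\<Sum>t'\<in>UNIV. KK p \<mu> m y (s', t')) = p s' (fst y)"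
  unfolding KK_def by (simp add: sum_distrib_left[symmetric] qq_sum)

lemma KK_sum: "(\<Sum>z\<in>UNIV. KK p \<mu> m y z) = 1"
  by (simp add: sum_pair_UNIV KK_marg p_sum)

lemma KK_stat: "(\<Sum>y\<in>UNIV. \<mu> y * KK p \<mu> m y (a, b)) = \<mu> (a, b)"
proof -
  have "(\<Sum>y\<in>UNIV. \<mu> y * KK p \<mu> m y (a, b)) = (\<Sum>s\<in>UNIV. \<Sum>t\<in>UNIV. \<mu> (s, t) * (p a s * qq p \<mu> m a t b))"
    by (simp add: sum_pair_UNIV KK_def)
  also have "\<dots> = (\<Sum>t\<in>UNIV. \<Sum>s\<in>UNIV. \<mu> (s, t) * (p a s * qq p \<mu> m a t b))"
    by (rule sum.swap)
  also have "\<dots> = (\<Sum>t\<in>UNIV. m t * (rr p \<mu> m a t * qq p \<mu> m a t b))"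
  proof (intro sum.cong refl)
    fix t
    have "(\<Sum>s\<in>UNIV. \<mu> (s, t) * (p a s * qq p \<mu> m a t b)) = (\<Sum>s\<in>UNIV. m t * qq p \<mu> m a t b * (p a s * cond_coupling \<mu> m s t))"
      by (intro sum.cong refl) (simp add: cc_mult[symmetric])
    also have "\<dots> = m t * (rr p \<mu> m a t * qq p \<mu> m a t b)"
      unfolding rr_def by (simp add: sum_distrib_left[symmetric])
    finally show "(\<Sum>s\<in>UNIV. \<mu> (s, t) * (p a s * qq p \<mu> m a t b)) = m t * (rr p \<mu> m a t * qq p \<mu> m a t b)" .
  qed
  also have "\<dots> = (\<Sum>t\<in>UNIV. m t * p b t) * cond_coupling \<mu> m a b"
    by (simp add: rq sum_distrib_right mult.assoc)
  also have "\<dots> = \<mu> (a, b)" using cc_mult[of a b] by (simp add: m_inv mult.commute)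
  finally show ?thesis .
qed


lemma C1: "Wf \<mu> (KK p \<mu> m) (\<lambda>i. UNIV \<times> {x i}) n (a, b) =
   (if b = x n then cond_coupling \<mu> m a b * (m (x 0) * (\<Prod>i<n. p (x (Suc i)) (x i))) else 0)"
proof (induction n arbitrary: a b)
  case 0
  then show ?case using cc_mult[of a "x 0"] by (auto simp: mult.commute)
next
  case (Suc n)
  define \<pi> where "\<pi> = m (x 0) * (\<Prod>i<n. p (x (Suc i)) (x i))"
  show ?case
  proof (cases "b = x (Suc n)")
    case True
    have "(\<Sum>y\<in>UNIV. Wf \<mu> (KK p \<mu> m) (\<lambda>i. UNIV \<times> {x i}) n y * KK p \<mu> m y (a, b))
       = (\<Sum>s\<in>UNIV. \<Sum>t\<in>UNIV. (if t = x n then cond_coupling \<mu> m s t * \<pi> else 0) * (p a s * qq p \<mu> m a t b))"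
      unfolding \<pi>_def by (simp add: sum_pair_UNIV Suc.IH KK_def)
    also have "\<dots> = (\<Sum>s\<in>UNIV. \<pi> * qq p \<mu> m a (x n) b * (p a s * cond_coupling \<mu> m s (x n)))"
    proof (intro sum.cong refl)
      fix s
      have "(\<Sum>t\<in>UNIV. (if t = x n then cond_coupling \<mu> m s t * \<pi> else 0) * (p a s * qq p \<mu> m a t b))
        = (\<Sum>t\<in>UNIV. if t = x n then cond_coupling \<mu> m s (x n) * \<pi> * (p a s * qq p \<mu> m a (x n) b) else 0)"
        by (intro sum.cong) auto
      then show "(\<Sum>t\<in>UNIV. (if t = x n then cond_coupling \<mu> m s t * \<pi> else 0) * (p a s * qq p \<mu> m a t b))
        = \<pi> * qq p \<mu> m a (x n) b * (p a s * cond_coupling \<mu> m s (x n))"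
        by (simp add: algebra_simps)
    qed
    also have "\<dots> = \<pi> * (rr p \<mu> m a (x n) * qq p \<mu> m a (x n) b)"
      unfolding rr_def sum_distrib_left sum_distrib_right by (simp add: mult_ac)
    also have "\<dots> = cond_coupling \<mu> m a b * (\<pi> * p b (x n))"
      by (simp add: rq)
    finally show ?thesis using True by (simp add: \<pi>_def mult.assoc)
  qed simp
qed

lemma C3: "Wf \<mu> (KK p \<mu> m) (\<lambda>i. UNIV) n z = \<mu> z"
proof (induction n arbitrary: z)
  case 0 then show ?case by simp
next
  case (Suc n)
  obtain a b where z: "z = (a, b)" by (cases z)
  show ?case using KK_stat[of a b] by (simp add: Suc.IH z)
qed

lemma MS:
  assumes "A (Suc n) = {c} \<times> UNIV"
  shows "(\<Sum>b\<in>UNIV. Wf \<mu> (KK p \<mu> m) A (Suc n) (a, b)) =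
     (if a = c then (\<Sum>s\<in>UNIV. (\<Sum>t\<in>UNIV. Wf \<mu> (KK p \<mu> m) A n (s, t)) * p a s) else 0)"
proof (cases "a = c")
  case True
  have "(\<Sum>b\<in>UNIV. Wf \<mu> (KK p \<mu> m) A (Suc n) (a, b)) =
     (\<Sum>b\<in>UNIV. \<Sum>y\<in>UNIV. Wf \<mu> (KK p \<mu> m) A n y * KK p \<mu> m y (a, b))"
    using assms True by simp
  also have "\<dots> = (\<Sum>y\<in>UNIV. Wf \<mu> (KK p \<mu> m) A n y * (\<Sum>b\<in>UNIV. KK p \<mu> m y (a, b)))"
    by (subst sum.swap) (simp add: sum_distrib_left)
  also have "\<dots> = (\<Sum>y\<in>UNIV. Wf \<mu> (KK p \<mu> m) A n y * p a (fst y))"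
    by (simp add: KK_marg)
  also have "\<dots> = (\<Sum>s\<in>UNIV. (\<Sum>t\<in>UNIV. Wf \<mu> (KK p \<mu> m) A n (s, t)) * p a s)"
    by (simp add: sum_pair_UNIV sum_distrib_right)
  finally show ?thesis using True by simp
qed (use assms in simp)

lemma C2: "(\<Sum>b\<in>UNIV. Wf \<mu> (KK p \<mu> m) (\<lambda>i. {x i} \<times> UNIV) n (a, b)) =
   (if a = x n then m (x 0) * (\<Prod>i<n. p (x (Suc i)) (x i)) else 0)"
proof (induction n arbitrary: a)
  case 0
  then show ?case by (simp add: mu_m1)
next
  case (Suc n)
  have "(\<Sum>b\<in>UNIV. Wf \<mu> (KK p \<mu> m) (\<lambda>i. {x i} \<times> UNIV) (Suc n) (a, b)) =
     (if a = x (Suc n) then (\<Sum>s\<in>UNIV. (\<Sum>t\<in>UNIV. Wf \<mu> (KK p \<mu> m) (\<lambda>i. {x i} \<times> UNIV) n (s, t)) * p a s) else 0)"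
    by (rule MS) simp
  also have "\<dots> = (if a = x (Suc n) then (m (x 0) * (\<Prod>i<n. p (x (Suc i)) (x i))) * p a (x n) else 0)"
    by (simp add: Suc.IH if_distrib[of "\<lambda>u. u * _"] sum.delta' cong: if_cong)
  finally show ?case by (simp add: mult.assoc)
qed

lemma future:
  assumes An: "A n \<subseteq> {a} \<times> UNIV" and Af: "\<forall>j. Suc n \<le> j \<and> j \<le> n + k \<longrightarrow> A j = {y j} \<times> UNIV"
  shows "(\<Sum>z\<in>UNIV. Wf \<mu> (KK p \<mu> m) A (n + k) z) = (\<Sum>z\<in>UNIV. Wf \<mu> (KK p \<mu> m) A n z) * (\<Sum>s\<in>UNIV. Gf p a y n k s)"
proof -
  define C where "C = (\<Sum>z\<in>UNIV. Wf \<mu> (KK p \<mu> m) A n z)"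
  have main: "j \<le> k \<Longrightarrow> (\<Sum>b\<in>UNIV. Wf \<mu> (KK p \<mu> m) A (n + j) (a', b)) = C * Gf p a y n j a'" for j a'
  proof (induction j arbitrary: a')
    case 0
    show ?case
    proof (cases "a' = a")
      case True
      have "C = (\<Sum>s\<in>UNIV. \<Sum>t\<in>UNIV. Wf \<mu> (KK p \<mu> m) A n (s, t))" unfolding C_def by (simp add: sum_pair_UNIV)
      also have "\<dots> = (\<Sum>s\<in>UNIV. if s = a then (\<Sum>t\<in>UNIV. Wf \<mu> (KK p \<mu> m) A n (s, t)) else 0)"
        using An by (intro sum.cong refl) (auto intro!: sum.neutral Wf_out)
      also have "\<dots> = (\<Sum>t\<in>UNIV. Wf \<mu> (KK p \<mu> m) A n (a, t))" by simp
      finally show ?thesis using True by simp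
    next
      case False
      then show ?thesis using An by (auto intro!: sum.neutral Wf_out)
    qed
  next
    case (Suc j)
    have "A (Suc (n + j)) = {y (n + Suc j)} \<times> UNIV" using Af Suc.prems by auto
    then have "(\<Sum>b\<in>UNIV. Wf \<mu> (KK p \<mu> m) A (Suc (n + j)) (a', b)) =
       (if a' = y (n + Suc j) then (\<Sum>s\<in>UNIV. (\<Sum>t\<in>UNIV. Wf \<mu> (KK p \<mu> m) A (n + j) (s, t)) * p a' s) else 0)"
      by (rule MS)
    also have "\<dots> = (if a' = y (n + Suc j) then (\<Sum>s\<in>UNIV. C * Gf p a y n j s * p a' s) else 0)"
      using Suc.IH Suc.prems by simp
    also have "\<dots> = C * Gf p a y n (Suc j) a'"
      by (simp add: sum_distrib_left mult.assoc)
    finally show ?case by simp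
  qed
  have "(\<Sum>z\<in>UNIV. Wf \<mu> (KK p \<mu> m) A (n + k) z) = (\<Sum>s\<in>UNIV. \<Sum>b\<in>UNIV. Wf \<mu> (KK p \<mu> m) A (n + k) (s, b))"
    by (simp add: sum_pair_UNIV)
  also have "\<dots> = (\<Sum>s\<in>UNIV. C * Gf p a y n k s)" using main by simp
  finally show ?thesis unfolding C_def by (simp add: sum_distrib_left)
qed

end

theorem lemma4:
  fixes m :: "'a::finite \<Rightarrow> real" and p :: "'a \<Rightarrow> 'a \<Rightarrow> real" and \<mu> :: "'a \<times> 'a \<Rightarrow> real"
  assumes "stochastic p" and "irreducible_chain p" and "aperiodic_chain p"
    and "invariant_measure m p" and "\<forall>s. m s > 0"
    and "assumption_A p"
    and "\<mu> \<in> couplings m"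
  shows "\<exists>(M :: (nat \<Rightarrow> 'a \<times> 'a) measure) (s :: nat \<Rightarrow> (nat \<Rightarrow> 'a \<times> 'a) \<Rightarrow> 'a) t.
    prob_space M \<and>
    (\<forall>n. s n \<in> measurable M (count_space UNIV)) \<and>
    (\<forall>n. t n \<in> measurable M (count_space UNIV)) \<and>
    markov_law M s m p \<and>
    \<comment> \<open>(P1)\<close>
    (\<forall>n k a x y.
       measure M {w \<in> space M. s n w = a \<and> (\<forall>i\<le>n. t i w = x i) \<and> (\<forall>i\<in>{Suc n..n+k}. s i w = y i)}
         * measure M {w \<in> space M. s n w = a}
       = measure M {w \<in> space M. s n w = a \<and> (\<forall>i\<le>n. t i w = x i)}
         * measure M {w \<in> space M. s n w = a \<and> (\<forall>i\<in>{Suc n..n+k}. s i w = y i)}) \<and>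
    \<comment> \<open>(P2)\<close>
    (\<forall>n x. measure M {w \<in> space M. \<forall>i\<le>n. t i w = x i}
         = measure M {w \<in> space M. \<forall>i\<le>n. s i w = x i}) \<and>
    \<comment> \<open>(P3)\<close>
    (\<forall>n a b. measure M {w \<in> space M. s n w = a \<and> t n w = b} = \<mu> (a, b)) \<and>
    \<comment> \<open>(P4)\<close>
    (\<forall>n a x. measure M {w \<in> space M. s n w = a \<and> (\<forall>i\<le>n. t i w = x i)}
         = cond_coupling \<mu> m a (x n) * measure M {w \<in> space M. \<forall>i\<le>n. t i w = x i})"
proof -
  note ctx = assms(1) assms(4) assms(5) assms(6) assms(7)
  have i0: "\<forall>z. 0 \<le> \<mu> z" using mu_nonneg[OF ctx] by blast
  have i1: "sum \<mu> UNIV = 1" using assms(7) by (simp add: couplings_def)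
  have k0: "\<forall>y z. 0 \<le> KK p \<mu> m y z" using KK_nonneg[OF ctx] by blast
  have k1: "\<forall>y. (\<Sum>z\<in>UNIV. KK p \<mu> m y z) = 1" using KK_sum[OF ctx] by blast
  obtain M :: "(nat \<Rightarrow> 'a\<times>'a) measure" where Mp: "prob_space M"
    and sM: "sets M = sets (PiM UNIV (\<lambda>_::nat. count_space (UNIV::('a\<times>'a) set)))"
    and spM: "space M = space (PiM UNIV (\<lambda>_::nat. count_space (UNIV::('a\<times>'a) set)))"
    and fdd: "\<forall>n x. measure M {w\<in>space M. \<forall>i\<le>n. w i = x i} = \<mu> (x 0) * (\<Prod>i<n. KK p \<mu> m (x i) (x (Suc i)))"
    using chain_exists[OF i0 i1 k0 k1] by blast
  have fdd': "\<And>n x. measure M {w\<in>space M. \<forall>i\<le>n. w i = x i} = \<mu> (x 0) * (\<Prod>i<n. KK p \<mu> m (x i) (x (Suc i)))"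
    using fdd by blast
  note LP = Lpath[OF Mp sM spM fdd']
  note LS = Lsum[OF Mp sM spM fdd']
  define s where "s = (\<lambda>n (w::nat \<Rightarrow> 'a\<times>'a). fst (w n))"
  define t where "t = (\<lambda>n (w::nat \<Rightarrow> 'a\<times>'a). snd (w n))"
  define \<pi> where "\<pi> n x = m (x 0) * (\<Prod>i<n. p (x (Suc i)) (x i))" for n and x :: "nat \<Rightarrow> 'a"
  have ms: "s n \<in> measurable M (count_space UNIV)" for n
    unfolding s_def measurable_cong_sets[OF sM refl]
    by (rule measurable_compose[OF measurable_component_singleton]) auto
  have mt: "t n \<in> measurable M (count_space UNIV)" for n
    unfolding t_def measurable_cong_sets[OF sM refl]
    by (rule measurable_compose[OF measurable_component_singleton]) auto
  have measT: "measure M {w\<in>space M. \<forall>i\<le>n. t i w = x i} = \<pi> n x" for n x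
  proof -
    have "{w\<in>space M. \<forall>i\<le>n. t i w = x i} = {w\<in>space M. \<forall>i\<le>n. w i \<in> UNIV \<times> {x i}}"
      unfolding t_def by (auto simp: mem_Times_iff)
    then have "measure M {w\<in>space M. \<forall>i\<le>n. t i w = x i} = (\<Sum>z\<in>UNIV. Wf \<mu> (KK p \<mu> m) (\<lambda>i. UNIV \<times> {x i}) n z)"
      using LS by simp
    also have "\<dots> = (\<Sum>a\<in>UNIV. \<Sum>b\<in>UNIV. (if b = x n then cond_coupling \<mu> m a b * \<pi> n x else 0))"
      by (simp add: sum_pair_UNIV C1[OF ctx] \<pi>_def)
    also have "\<dots> = (\<Sum>a\<in>UNIV. cond_coupling \<mu> m a (x n)) * \<pi> n x"
      by (simp add: sum_distrib_right)
    also have "\<dots> = \<pi> n x" by (simp add: cc_sum[OF ctx])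
    finally show ?thesis .
  qed
  have measS: "measure M {w\<in>space M. \<forall>i\<le>n. s i w = x i} = \<pi> n x" for n x
  proof -
    have "{w\<in>space M. \<forall>i\<le>n. s i w = x i} = {w\<in>space M. \<forall>i\<le>n. w i \<in> {x i} \<times> UNIV}"
      unfolding s_def by (auto simp: mem_Times_iff)
    then have "measure M {w\<in>space M. \<forall>i\<le>n. s i w = x i} = (\<Sum>z\<in>UNIV. Wf \<mu> (KK p \<mu> m) (\<lambda>i. {x i} \<times> UNIV) n z)"
      using LS by simp
    also have "\<dots> = (\<Sum>a\<in>UNIV. if a = x n then \<pi> n x else 0)"
      by (simp add: sum_pair_UNIV C2[OF ctx] \<pi>_def)
    also have "\<dots> = \<pi> n x" by simp
    finally show ?thesis .
  qed
  have markov: "markov_law M s m p"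
    unfolding markov_law_def using measS by (simp add: \<pi>_def)
  have P2: "\<forall>n x. measure M {w \<in> space M. \<forall>i\<le>n. t i w = x i} = measure M {w \<in> space M. \<forall>i\<le>n. s i w = x i}"
    using measS measT by simp
  have P3: "\<forall>n a b. measure M {w \<in> space M. s n w = a \<and> t n w = b} = \<mu> (a, b)"
  proof (intro allI)
    fix n :: nat and a b :: 'a
    have "{w \<in> space M. s n w = a \<and> t n w = b} = {w\<in>space M. (\<forall>i\<le>n. w i \<in> UNIV) \<and> (\<forall>i\<in>{n..n+0}. w i = (\<lambda>_. (a, b)) i)}"
      unfolding s_def t_def by (auto simp: prod_eq_iff)
    then show "measure M {w \<in> space M. s n w = a \<and> t n w = b} = \<mu> (a, b)"
      using LP[of n "\<lambda>_. UNIV" 0 "\<lambda>_. (a, b)"] C3[OF ctx] by simp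
  qed
  have P4: "\<forall>n a x. measure M {w \<in> space M. s n w = a \<and> (\<forall>i\<le>n. t i w = x i)}
         = cond_coupling \<mu> m a (x n) * measure M {w \<in> space M. \<forall>i\<le>n. t i w = x i}"
  proof (intro allI)
    fix n :: nat and a :: 'a and x :: "nat \<Rightarrow> 'a"
    have "{w \<in> space M. s n w = a \<and> (\<forall>i\<le>n. t i w = x i)} =
      {w\<in>space M. (\<forall>i\<le>n. w i \<in> UNIV \<times> {x i}) \<and> (\<forall>i\<in>{n..n+0}. w i = (\<lambda>_. (a, x n)) i)}"
      unfolding s_def t_def by (auto simp: prod_eq_iff mem_Times_iff)
    then have "measure M {w \<in> space M. s n w = a \<and> (\<forall>i\<le>n. t i w = x i)} = cond_coupling \<mu> m a (x n) * \<pi> n x"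
      using LP[of n "\<lambda>i. UNIV \<times> {x i}" 0 "\<lambda>_. (a, x n)"] C1[OF ctx] by (simp add: \<pi>_def)
    then show "measure M {w \<in> space M. s n w = a \<and> (\<forall>i\<le>n. t i w = x i)}
         = cond_coupling \<mu> m a (x n) * measure M {w \<in> space M. \<forall>i\<le>n. t i w = x i}"
      using measT by simp
  qed
  have P1: "\<forall>n k a x y.
       measure M {w \<in> space M. s n w = a \<and> (\<forall>i\<le>n. t i w = x i) \<and> (\<forall>i\<in>{Suc n..n+k}. s i w = y i)}
         * measure M {w \<in> space M. s n w = a}
       = measure M {w \<in> space M. s n w = a \<and> (\<forall>i\<le>n. t i w = x i)}
         * measure M {w \<in> space M. s n w = a \<and> (\<forall>i\<in>{Suc n..n+k}. s i w = y i)}"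
  proof (intro allI)
    fix n k :: nat and a :: 'a and x y :: "nat \<Rightarrow> 'a"
    define A1 :: "nat \<Rightarrow> ('a \<times> 'a) set" where "A1 i = (if i < n then UNIV \<times> {x i} else if i = n then {(a, x n)} else {y i} \<times> UNIV)" for i
    define A3 :: "nat \<Rightarrow> ('a \<times> 'a) set" where "A3 i = (if i < n then UNIV else if i = n then {a} \<times> UNIV else {y i} \<times> UNIV)" for i
    define G where "G = (\<Sum>s\<in>UNIV. Gf p a y n k s)"
    have e1: "{w \<in> space M. s n w = a \<and> (\<forall>i\<le>n. t i w = x i) \<and> (\<forall>i\<in>{Suc n..n+k}. s i w = y i)}
       = {w\<in>space M. \<forall>i\<le>n+k. w i \<in> A1 i}"
      unfolding s_def t_def A1_def using setE1[of _ n a x k y] by blast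
    have e2: "{w \<in> space M. s n w = a \<and> (\<forall>i\<le>n. t i w = x i)} = {w\<in>space M. \<forall>i\<le>n. w i \<in> A1 i}"
      unfolding s_def t_def A1_def using setE1[of _ n a x 0 y] by simp
    have e3: "{w \<in> space M. s n w = a \<and> (\<forall>i\<in>{Suc n..n+k}. s i w = y i)} = {w\<in>space M. \<forall>i\<le>n+k. w i \<in> A3 i}"
      unfolding s_def A3_def using setE3[of _ n a k y] by blast
    have e0: "{w \<in> space M. s n w = a} = {w\<in>space M. \<forall>i\<le>n. w i \<in> A3 i}"
      unfolding s_def A3_def using setE3[of _ n a 0 y] by simp
    have f1: "(\<Sum>z\<in>UNIV. Wf \<mu> (KK p \<mu> m) A1 (n + k) z) = (\<Sum>z\<in>UNIV. Wf \<mu> (KK p \<mu> m) A1 n z) * G"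
      unfolding G_def by (rule future[OF ctx]) (auto simp: A1_def)
    have f3: "(\<Sum>z\<in>UNIV. Wf \<mu> (KK p \<mu> m) A3 (n + k) z) = (\<Sum>z\<in>UNIV. Wf \<mu> (KK p \<mu> m) A3 n z) * G"
      unfolding G_def by (rule future[OF ctx]) (auto simp: A3_def)
    show "measure M {w \<in> space M. s n w = a \<and> (\<forall>i\<le>n. t i w = x i) \<and> (\<forall>i\<in>{Suc n..n+k}. s i w = y i)}
         * measure M {w \<in> space M. s n w = a}
       = measure M {w \<in> space M. s n w = a \<and> (\<forall>i\<le>n. t i w = x i)}
         * measure M {w \<in> space M. s n w = a \<and> (\<forall>i\<in>{Suc n..n+k}. s i w = y i)}"
      unfolding e1 e2 e3 e0 LS f1 f3 by simp
  qed
  show ?thesis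
    using Mp ms mt markov P1 P2 P3 P4 by blast
qed

end
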